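(* Let $\Sigma\subset(\mathbb{M},g_L)$ be a regular surface and $\gamma:[a,b]\to\Sigma$ a Euclidean $C^2$-smooth regular curve passing through non-characteristic points. Then: (1) if $\omega(\dot\gamma(t))\neq0$, $$k^{\infty,\nabla^{1,\alpha}}_{\gamma,\Sigma}=\frac{\left|\bar p\frac{(2-\alpha)\dot\gamma_1}{2\gamma_1}+\bar q\left(\frac{(1-\alpha)\dot\gamma_2}{\gamma_1}+\frac{\alpha\dot\gamma_3}{2}\right)\right|}{|\omega(\dot\gamma(t))|};$$ (2) if $\omega(\dot\gamma(t))=0$ and $\frac{d}{dt}\omega(\dot\gamma(t))=0$, then $k^{\infty,\nabla^{1,\alpha}}_{\gamma,\Sigma}=0$; (3) if $\omega(\dot\gamma(t))=0$ and $\frac{d}{dt}\omega(\dot\gamma(t))\neq0$, then $$\lim_{L\to+\infty}\frac{k^{L,\nabla^{1,\alpha}}_{\gamma,\Sigma}}{\sqrt L}=\frac{\left|\frac{d}{dt}\omega(\dot\gamma(t))\right|}{\left(\bar q\frac{\dot\gamma_1}{\gamma_1}-\bar p\dot\gamma_3\right)^2}.$$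
   Context: The affine group $\mathbb{M}$ is modeled on $\{(x_1,x_2,x_3)\in\mathbb{R}^3: x_1>0\}$ with product $(m,n,s)\star(\lambda,\mu,\nu)=(m\lambda,m\mu+n,\nu+s)$. Put $X_1=x_1\partial_{x_1}$, $X_2=x_1\partial_{x_2}+\partial_{x_3}$, $X_3=x_1\partial_{x_2}$, with dual coframe $\omega_1=\frac1{x_1}dx_1$, $\omega_2=dx_3$, $\omega=\frac1{x_1}dx_2-dx_3$. For a constant $L>0$, $g_L=\omega_1\otimes\omega_1+\omega_2\otimes\omega_2+L\,\omega\otimes\omega$, so $X_1,X_2,\widetilde X_3:=L^{-1/2}X_3$ is $g_L$-orthonormal; $\langle\cdot,\cdot\rangle_L$ and $\|\cdot\|_L$ denote $g_L$ and its norm, and $\nabla$ is the Levi-Civita connection of $g_L$. Let $H_1=\mathrm{span}\{X_1,X_2\}$, and let $P^1$, $P^{1,\perp}$ be the $g_L$-orthogonal projections onto $H_1$ and onto $H_1^\perp=\mathrm{span}\{X_3\}$. For a real constant $\alpha$, the first kind of deformed Schouten–Van Kampen connection is $\nabla^{1,\alpha}_XY=(1-\alpha)\nabla_XY+\alpha P^1\nabla_X(P^1Y)+\alpha P^{1,\perp}\nabla_X(P^{1,\perp}Y)$. For a curve $\gamma=(\gamma_1,\gamma_2,\gamma_3)$, $\omega(\dot\gamma(t))=\frac{\dot\gamma_2}{\gamma_1}-\dot\gamma_3$. A regular surface is a Euclidean $C^2$-smooth compact oriented surface $\Sigma=\{u=0\}$ with $u$ Euclidean $C^2$ and with nonvanishing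 Euclidean gradient. Set $\nabla_Hu=X_1(u)X_1+X_2(u)X_2$; a point of $\Sigma$ is characteristic if $\nabla_Hu=0$. Put $p=X_1u$, $q=X_2u$, $r=\widetilde X_3u$, $l=\sqrt{p^2+q^2}$, $l_L=\sqrt{p^2+q^2+r^2}$, $\bar p=p/l$, $\bar q=q/l$, $\bar p_L=p/l_L$, $\bar q_L=q/l_L$, $\bar r_L=r/l_L$. At non-characteristic points, $e_1=\bar qX_1-\bar pX_2$ and $e_2=\bar r_L\bar pX_1+\bar r_L\bar qX_2-\frac{l}{l_L}\widetilde X_3$ form a $g_L$-orthonormal frame of $T\Sigma$. For $U,V$ tangent to $\Sigma$, $\nabla^{\Sigma,1,\alpha}_UV$ is the $g_L$-orthogonal projection onto $T\Sigma$ of $\nabla^{1,\alpha}_UV$. The geodesic curvature is $k^{L,\nabla^{1,\alpha}}_{\gamma,\Sigma}=\sqrt{\frac{\|\nabla^{\Sigma,1,\alpha}_{\dot\gamma}\dot\gamma\|_L^2}{\|\dot\gamma\|_L^4}-\frac{\langle\nabla^{\Sigma,1,\alpha}_{\dot\gamma}\dot\gamma,\dot\gamma\rangle_L^2}{\|\dot\gamma\|_L^6}}$ and $k^{\infty,\nabla^{1,\alpha}}_{\gamma,\Sigma}:=\lim_{L\to+\infty}k^{L,\nabla^{1,\alpha}}_{\gamma,\Sigma}$ when it exists. *)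

theory Defs
  imports "HOL-Analysis.Analysis"
begin

text \<open>Points of the affine group M are modelled as vectors x in real^3 (with x$1 > 0);
  tangent vectors are written in the coordinate basis d/dx1, d/dx2, d/dx3.\<close>

definition X1f :: "real^3 \<Rightarrow> real^3" where
  "X1f x = vector [x$1, 0, 0]"

definition X2f :: "real^3 \<Rightarrow> real^3" where
  "X2f x = vector [0, x$1, 1]"

definition X3f :: "real^3 \<Rightarrow> real^3" where
  "X3f x = vector [0, x$1, 0]"

definition X3t :: "real \<Rightarrow> real^3 \<Rightarrow> real^3" where
  "X3t L x = (1 / sqrt L) *\<^sub>R X3f x"

definition omega1 :: "real^3 \<Rightarrow> real^3 \<Rightarrow> real" where
  "omega1 x v = v$1 / x$1"

definition omega2 :: "real^3 \<Rightarrow> real^3 \<Rightarrow> real" where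
  "omega2 x v = v$3"

definition omegaf :: "real^3 \<Rightarrow> real^3 \<Rightarrow> real" where
  "omegaf x v = v$2 / x$1 - v$3"

definition ginner :: "real \<Rightarrow> real^3 \<Rightarrow> real^3 \<Rightarrow> real^3 \<Rightarrow> real" where
  "ginner L x v w = omega1 x v * omega1 x w + omega2 x v * omega2 x w
                    + L * omegaf x v * omegaf x w"

definition gnorm :: "real \<Rightarrow> real^3 \<Rightarrow> real^3 \<Rightarrow> real" where
  "gnorm L x v = sqrt (ginner L x v v)"

definition gmat :: "real \<Rightarrow> real^3 \<Rightarrow> real^3^3" where
  "gmat L x = (\<chi> i j. ginner L x (axis i 1) (axis j 1))"

definition dg :: "real \<Rightarrow> real^3 \<Rightarrow> 3 \<Rightarrow> 3 \<Rightarrow> 3 \<Rightarrow> real" where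
  "dg L x i j l = deriv (\<lambda>s. gmat L (x + s *\<^sub>R axis i 1) $ j $ l) 0"

definition christ :: "real \<Rightarrow> real^3 \<Rightarrow> 3 \<Rightarrow> 3 \<Rightarrow> 3 \<Rightarrow> real" where
  "christ L x k i j = (1/2) * (\<Sum>l\<in>UNIV. matrix_inv (gmat L x) $ k $ l
       * (dg L x i j l + dg L x j i l - dg L x l i j))"

definition covd :: "real \<Rightarrow> (real \<Rightarrow> real^3) \<Rightarrow> (real \<Rightarrow> real^3)
                    \<Rightarrow> (real \<Rightarrow> real^3) \<Rightarrow> real \<Rightarrow> real^3" where
  "covd L \<gamma> \<gamma>' V t = vector_derivative V (at t)
     + (\<chi> k. \<Sum>i\<in>UNIV. \<Sum>j\<in>UNIV. christ L (\<gamma> t) k i j * \<gamma>' t $ i * V t $ j)"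

text \<open>g_L-orthogonal projections onto H1 = span{X1,X2} and onto span{X3}
  (via the g_L-orthonormal frame X1, X2, X3/sqrt L).\<close>
definition P1 :: "real \<Rightarrow> real^3 \<Rightarrow> real^3 \<Rightarrow> real^3" where
  "P1 L x v = ginner L x v (X1f x) *\<^sub>R X1f x + ginner L x v (X2f x) *\<^sub>R X2f x"

definition P1perp :: "real \<Rightarrow> real^3 \<Rightarrow> real^3 \<Rightarrow> real^3" where
  "P1perp L x v = ginner L x v (X3t L x) *\<^sub>R X3t L x"

definition nabla1a :: "real \<Rightarrow> real \<Rightarrow> (real \<Rightarrow> real^3) \<Rightarrow> (real \<Rightarrow> real^3) \<Rightarrow> real \<Rightarrow> real^3" where
  "nabla1a L \<alpha> \<gamma> \<gamma>' t =
     (1 - \<alpha>) *\<^sub>R covd L \<gamma> \<gamma>' \<gamma>' t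
     + \<alpha> *\<^sub>R P1 L (\<gamma> t) (covd L \<gamma> \<gamma>' (\<lambda>s. P1 L (\<gamma> s) (\<gamma>' s)) t)
     + \<alpha> *\<^sub>R P1perp L (\<gamma> t) (covd L \<gamma> \<gamma>' (\<lambda>s. P1perp L (\<gamma> s) (\<gamma>' s)) t)"

text \<open>Euclidean gradient of u, its g_L-gradient, and the g_L-orthogonal projection
  onto the tangent plane ker(du) of the level surface.\<close>
definition egrad :: "(real^3 \<Rightarrow> real) \<Rightarrow> real^3 \<Rightarrow> real^3" where
  "egrad u x = (\<chi> i. frechet_derivative u (at x) (axis i 1))"

definition ggrad :: "real \<Rightarrow> (real^3 \<Rightarrow> real) \<Rightarrow> real^3 \<Rightarrow> real^3" where
  "ggrad L u x = matrix_inv (gmat L x) *v egrad u x"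

definition projT :: "real \<Rightarrow> (real^3 \<Rightarrow> real) \<Rightarrow> real^3 \<Rightarrow> real^3 \<Rightarrow> real^3" where
  "projT L u x v = v - ((egrad u x \<bullet> v) / (egrad u x \<bullet> ggrad L u x)) *\<^sub>R ggrad L u x"

definition kgeo :: "real \<Rightarrow> real \<Rightarrow> (real^3 \<Rightarrow> real) \<Rightarrow> (real \<Rightarrow> real^3) \<Rightarrow> (real \<Rightarrow> real^3) \<Rightarrow> real \<Rightarrow> real" where
  "kgeo L \<alpha> u \<gamma> \<gamma>' t =
     (let x = \<gamma> t; v = \<gamma>' t; D = projT L u x (nabla1a L \<alpha> \<gamma> \<gamma>' t) in
      sqrt ((gnorm L x D)^2 / (gnorm L x v)^4 - (ginner L x D v)^2 / (gnorm L x v)^6))"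

definition Xu :: "(real^3 \<Rightarrow> real^3) \<Rightarrow> (real^3 \<Rightarrow> real) \<Rightarrow> real^3 \<Rightarrow> real" where
  "Xu X u x = frechet_derivative u (at x) (X x)"

definition pbar :: "(real^3 \<Rightarrow> real) \<Rightarrow> real^3 \<Rightarrow> real" where
  "pbar u x = Xu X1f u x / sqrt ((Xu X1f u x)^2 + (Xu X2f u x)^2)"

definition qbar :: "(real^3 \<Rightarrow> real) \<Rightarrow> real^3 \<Rightarrow> real" where
  "qbar u x = Xu X2f u x / sqrt ((Xu X1f u x)^2 + (Xu X2f u x)^2)"

end

theory Submission
  imports Defs "HOL-Real_Asymp.Real_Asymp"
begin
definition dl :: "3 \<Rightarrow> 3 \<Rightarrow> real" where "dl j k = (if j = k then 1 else 0)"
lemma dl_simps[simp]: "dl 1 1 = 1" "dl 2 2 = 1" "dl 3 3 = 1" "dl 1 2 = 0" "dl 1 3 = 0" "dl 2 1 = 0" "dl 2 3 = 0" "dl 3 1 = 0" "dl 3 2 = 0"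
  by (simp_all add: dl_def)
lemma dl_sym: "dl j k = dl k j" by (auto simp: dl_def)
lemma axis_nth3: "axis j (1::real) $ k = dl k j" by (simp add: axis_def dl_def)

lemma gmat_nth: "gmat L y $ j $ l = (dl j 1 * dl l 1 + L * dl j 2 * dl l 2)/(y$1)^2
   - L*(dl j 2 * dl l 3 + dl j 3 * dl l 2)/(y$1) + (1+L)* dl j 3 * dl l 3"
  using exhaust_3[of j] exhaust_3[of l]
  by (elim disjE) (simp_all add: gmat_def ginner_def omega1_def omega2_def omegaf_def axis_nth3 field_simps power2_eq_square)

lemma dg_eq: assumes "x$1 > 0"
  shows "dg L x i j l = dl i 1 * (-2*(dl j 1*dl l 1 + L*dl j 2*dl l 2)/(x$1)^3 + L*(dl j 2*dl l 3 + dl j 3*dl l 2)/(x$1)^2)"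
proof -
  define A where "A = dl j 1 * dl l 1 + L * dl j 2 * dl l 2"
  define B where "B = L*(dl j 2 * dl l 3 + dl j 3 * dl l 2)"
  define C where "C = (1+L)* dl j 3 * dl l 3"
  define d where "d = dl 1 i"
  have f: "(\<lambda>s. gmat L (x + s *\<^sub>R axis i 1) $ j $ l) = (\<lambda>s. A/(x$1 + s*d)^2 - B/(x$1+s*d) + C)"
    by (rule ext) (simp add: gmat_nth A_def B_def C_def d_def axis_nth3 mult.commute)
  have "((\<lambda>s. A/(x$1 + s*d)^2 - B/(x$1+s*d) + C) has_real_derivative (-2*A*d/(x$1)^3 + B*d/(x$1)^2)) (at 0)"
    using assms
    by (auto intro!: derivative_eq_intros simp: field_simps power2_eq_square power3_eq_cube)
  then have "dg L x i j l = -2*A*d/(x$1)^3 + B*d/(x$1)^2"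
    unfolding dg_def f by (rule DERIV_imp_deriv)
  then show ?thesis by (simp add: A_def B_def d_def field_simps dl_sym)
qed

definition minv :: "real \<Rightarrow> real \<Rightarrow> real^3^3" where
  "minv L y1 = (\<chi> k l. dl k 1*dl l 1*y1^2 + dl k 2 * dl l 2 * y1^2*(1+L)/L + (dl k 2*dl l 3 + dl k 3 * dl l 2)*y1 + dl k 3*dl l 3)"

lemma matrix_inv_eqI:
  fixes A B :: "real^3^3"
  assumes "A ** B = mat 1" "B ** A = mat 1"
  shows "matrix_inv A = B"
proof -
  have ex: "\<exists>A'. A ** A' = mat 1 \<and> A' ** A = mat 1" using assms by blast
  define C where "C = matrix_inv A"
  have C: "A ** C = mat 1" "C ** A = mat 1"
    using someI_ex[OF ex] unfolding C_def matrix_inv_def by auto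
  have "C = C ** (A ** B)" using assms by (simp add: matrix_mul_rid)
  also have "\<dots> = (C ** A) ** B" by (simp add: matrix_mul_assoc)
  also have "\<dots> = B" using C by (simp add: matrix_mul_lid)
  finally show ?thesis unfolding C_def .
qed

lemma ginv: assumes "x$1 > 0" "L > 0"
  shows "matrix_inv (gmat L x) = minv L (x$1)"
proof (rule matrix_inv_eqI)
  show "gmat L x ** minv L (x $ 1) = mat 1"
    using assms
    by (simp add: vec_eq_iff forall_3 matrix_matrix_mult_def sum_3 mat_def minv_def gmat_nth field_simps power2_eq_square)
  show "minv L (x $ 1) ** gmat L x = mat 1"
    using assms
    by (simp add: vec_eq_iff forall_3 matrix_matrix_mult_def sum_3 mat_def minv_def gmat_nth field_simps power2_eq_square)
qed

lemma christ_eq: assumes "x$1 > 0" "L > 0"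
  shows "christ L x k i j =
    dl k 1 * (-dl i 1*dl j 1/x$1 + L*dl i 2*dl j 2/x$1 - L/2*(dl i 2*dl j 3 + dl i 3 * dl j 2))
  + dl k 2 * (-(2+L)/(2*x$1)*(dl i 1*dl j 2 + dl i 2*dl j 1) + (1+L)/2*(dl i 1 * dl j 3 + dl i 3 * dl j 1))
  + dl k 3 * (-L/(2*(x$1)^2)*(dl i 1 * dl j 2 + dl i 2 * dl j 1) + L/(2*x$1)*(dl i 1 * dl j 3 + dl i 3 * dl j 1))"
  using exhaust_3[of k] exhaust_3[of i] exhaust_3[of j] assms
  by (elim disjE) (simp_all add: christ_def ginv dg_eq minv_def sum_3 field_simps power2_eq_square power3_eq_cube)

lemma covd_eq: assumes "\<gamma> t $ 1 > 0" "L > 0" "(V has_vector_derivative V') (at t)"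
  shows "covd L \<gamma> \<gamma>' V t = V' + vector [
     - V t$1 * \<gamma>' t$1/\<gamma> t$1 + (L/\<gamma> t$1) * \<gamma>' t$2 * V t$2 - (L/2)*(\<gamma>' t$2 * V t$3 + \<gamma>' t$3 * V t$2),
     -(2+L)/(2*\<gamma> t$1)*(\<gamma>' t$1 * V t$2 + \<gamma>' t$2 * V t$1) + (1+L)/2 * (\<gamma>' t$1 * V t$3 + \<gamma>' t$3 * V t$1),
     - L/(2*(\<gamma> t$1)^2)*(\<gamma>' t$1 * V t$2 + \<gamma>' t$2 * V t$1) + L/(2*\<gamma> t$1)*(\<gamma>' t$1 * V t$3 + \<gamma>' t$3 * V t$1)]"
  using assms
  by (simp add: covd_def vector_derivative_at vec_eq_iff forall_3 sum_3 christ_eq field_simps)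

lemma vd_nth: "(f has_vector_derivative f') F \<Longrightarrow> ((\<lambda>s. f s $ i) has_real_derivative f' $ i) F"
  using bounded_linear.has_vector_derivative[OF bounded_linear_vec_nth, of f f' F i]
  by (simp add: has_real_derivative_iff_has_vector_derivative)

lemma vector3_axis: "(vector [a, b, c] :: real^3) = a *\<^sub>R axis 1 1 + b *\<^sub>R axis 2 1 + c *\<^sub>R axis 3 1"
  by (simp add: vec_eq_iff forall_3 axis_nth3)

lemma vd_vector3:
  assumes "(f1 has_real_derivative d1) (at t)" "(f2 has_real_derivative d2) (at t)" "(f3 has_real_derivative d3) (at t)"
  shows "((\<lambda>s. vector [f1 s, f2 s, f3 s] :: real^3) has_vector_derivative vector [d1, d2, d3]) (at t)"
  unfolding vector3_axis
  by (rule derivative_eq_intros assms has_vector_derivative_const refl | simp)+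

lemma P1_eq: "x$1 \<noteq> 0 \<Longrightarrow> P1 L x y = vector [y$1, x$1 * y$3, y$3]"
  by (simp add: P1_def ginner_def X1f_def X2f_def omega1_def omega2_def omegaf_def vec_eq_iff forall_3)

lemma sqrt_sqrt_mult: "0 \<le> L \<Longrightarrow> sqrt L * (sqrt L * z) = L * z"
  by (simp add: mult.assoc[symmetric])

lemma P1perp_eq: "x$1 \<noteq> 0 \<Longrightarrow> L > 0 \<Longrightarrow> P1perp L x y = vector [0, y$2 - x$1 * y$3, 0]"
  by (simp add: P1perp_def X3t_def X3f_def ginner_def omega1_def omega2_def omegaf_def vec_eq_iff forall_3 field_simps sqrt_sqrt_mult)

definition fr1 :: "real^3 \<Rightarrow> real^3 \<Rightarrow> real" where "fr1 x y = y$1/x$1"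

lemma ginner_frame: "ginner L x y z = fr1 x y * fr1 x z + y$3 * z$3 + L * omegaf x y * omegaf x z"
  by (simp add: ginner_def fr1_def omega1_def omega2_def)

lemma gram:
  fixes a1 a2 a3 b1 b2 b3 m1 m2 m3 :: real
  assumes bm: "b1*m1 + b2*m2 + b3*m3 = 0" and mm: "m1^2+m2^2+m3^2 > 0" and bb: "b1^2+b2^2+b3^2 > 0"
  defines "lam \<equiv> (a1*m1+a2*m2+a3*m3)/(m1^2+m2^2+m3^2)"
  shows "((a1-lam*m1)^2+(a2-lam*m2)^2+(a3-lam*m3)^2)/(b1^2+b2^2+b3^2)^2
       - ((a1-lam*m1)*b1+(a2-lam*m2)*b2+(a3-lam*m3)*b3)^2/(b1^2+b2^2+b3^2)^3
     = (a1*(b2*m3-b3*m2) - a2*(b1*m3-b3*m1) + a3*(b1*m2-b2*m1))^2/((m1^2+m2^2+m3^2)*(b1^2+b2^2+b3^2)^3)"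
proof -
  define M where "M = m1^2+m2^2+m3^2"
  define B where "B = b1^2+b2^2+b3^2"
  have M: "M > 0" and B: "B > 0" using mm bb by (auto simp: M_def B_def)
  have b3: "b1*m1 = - b2*m2 - b3*m3" using bm by linarith
  have key: "(((a1-lam*m1)^2+(a2-lam*m2)^2+(a3-lam*m3)^2) * B - ((a1-lam*m1)*b1+(a2-lam*m2)*b2+(a3-lam*m3)*b3)^2) * M
     = (a1*(b2*m3-b3*m2) - a2*(b1*m3-b3*m1) + a3*(b1*m2-b2*m1))^2"
  proof -
    have lamM: "lam * M = a1*m1+a2*m2+a3*m3" using M by (simp add: lam_def M_def)
    have e1: "(a1-lam*m1)*b1+(a2-lam*m2)*b2+(a3-lam*m3)*b3 = a1*b1+a2*b2+a3*b3 - lam*(b1*m1 + b2*m2 + b3*m3)"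
      by (simp add: algebra_simps)
    have e2: "(a1-lam*m1)^2+(a2-lam*m2)^2+(a3-lam*m3)^2 = (a1^2+a2^2+a3^2) - 2*lam*(a1*m1+a2*m2+a3*m3) + lam^2 * M"
      by (simp add: M_def power2_eq_square algebra_simps)
    have e3: "((a1^2+a2^2+a3^2) - 2*lam*(a1*m1+a2*m2+a3*m3) + lam^2 * M) * M = (a1^2+a2^2+a3^2)*M - (a1*m1+a2*m2+a3*m3)^2"
      unfolding lamM[symmetric] by (simp add: power2_eq_square algebra_simps)
    have e4: "((a1^2+a2^2+a3^2)*B - (a1*b1+a2*b2+a3*b3)^2) * M - (a1*m1+a2*m2+a3*m3)^2 * B
        = (a1*(b2*m3-b3*m2) - a2*(b1*m3-b3*m1) + a3*(b1*m2-b2*m1))^2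
          - 2*(a1*m1+a2*m2+a3*m3)*(b1*m1 + b2*m2 + b3*m3)*(a1*b1+a2*b2+a3*b3) + (a1^2+a2^2+a3^2)*(b1*m1 + b2*m2 + b3*m3)^2"
      unfolding M_def B_def by algebra
    have e5: "(((a1^2+a2^2+a3^2) - 2*lam*(a1*m1+a2*m2+a3*m3) + lam^2 * M) * B - (a1*b1+a2*b2+a3*b3)^2) * M
       = (((a1^2+a2^2+a3^2) - 2*lam*(a1*m1+a2*m2+a3*m3) + lam^2 * M) * M) * B - (a1*b1+a2*b2+a3*b3)^2 * M"
      by (simp add: algebra_simps)
    have e6: "(a1-lam*m1)*b1+(a2-lam*m2)*b2+(a3-lam*m3)*b3 = a1*b1+a2*b2+a3*b3"
      unfolding e1 bm by simp
    show ?thesis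
      unfolding e6 e2 e5 e3 using e4 unfolding bm by (simp add: algebra_simps)

  qed
  have gen: "\<And>G T::real. G/B^2 - T^2/B^3 = ((G*B - T^2)*M)/(M*B^3)"
    using M B by (simp add: field_simps power2_eq_square power3_eq_cube)
  show ?thesis
    unfolding M_def[symmetric] B_def[symmetric] gen key ..
qed

lemma N_frame:
  fixes \<alpha> L :: real and \<gamma> \<gamma>' :: "real \<Rightarrow> real^3"
  assumes x1: "\<gamma> t $ 1 > 0" and L: "L > 0"
    and hv: "(\<gamma>' has_vector_derivative w) (at t)"
    and h1: "((\<lambda>s. P1 L (\<gamma> s) (\<gamma>' s)) has_vector_derivative vector[w$1, \<gamma>' t$1 * \<gamma>' t$3 + \<gamma> t$1 * w$3, w$3]) (at t)"
    and h2: "((\<lambda>s. P1perp L (\<gamma> s) (\<gamma>' s)) has_vector_derivative vector[0, w$2 - \<gamma>' t$1 * \<gamma>' t$3 - \<gamma> t$1 * w$3, 0]) (at t)"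
  defines "x \<equiv> \<gamma> t" and "v \<equiv> \<gamma>' t" and "N \<equiv> nabla1a L \<alpha> \<gamma> \<gamma>' t"
  shows "N$1/x$1 = (w$1/x$1 - (v$1)^2/(x$1)^2) + (1-\<alpha>/2)*L*(v$3)* omegaf x v + (1-\<alpha>)*L*(omegaf x v)^2"
    "N$3 = w$3 - (1-\<alpha>/2)*L*(v$1/x$1)* omegaf x v"
    "omegaf x N = (w$2/x$1 - v$2 * v$1/(x$1)^2 - w$3) - (1-\<alpha>)*(v$1/x$1)* omegaf x v"
proof -
  have x0: "x$1 \<noteq> 0" using x1 x_def by simp
  have N: "N = (1 - \<alpha>) *\<^sub>R covd L \<gamma> \<gamma>' \<gamma>' t
     + \<alpha> *\<^sub>R P1 L x (covd L \<gamma> \<gamma>' (\<lambda>s. P1 L (\<gamma> s) (\<gamma>' s)) t)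
     + \<alpha> *\<^sub>R P1perp L x (covd L \<gamma> \<gamma>' (\<lambda>s. P1perp L (\<gamma> s) (\<gamma>' s)) t)"
    unfolding N_def nabla1a_def x_def ..
  note c0 = covd_eq[where \<gamma>=\<gamma> and t=t and \<gamma>'=\<gamma>', OF x1 L hv]
  note c1 = covd_eq[where \<gamma>=\<gamma> and t=t and \<gamma>'=\<gamma>', OF x1 L h1]
  note c2 = covd_eq[where \<gamma>=\<gamma> and t=t and \<gamma>'=\<gamma>', OF x1 L h2]
  have N': "N = (1 - \<alpha>) *\<^sub>R covd L \<gamma> \<gamma>' \<gamma>' t
     + \<alpha> *\<^sub>R P1 L x (covd L \<gamma> \<gamma>' (\<lambda>s. P1 L (\<gamma> s) (\<gamma>' s)) t)
     + \<alpha> *\<^sub>R P1perp L x (covd L \<gamma> \<gamma>' (\<lambda>s. P1perp L (\<gamma> s) (\<gamma>' s)) t)" by (rule N)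
  show "N$1/x$1 = (w$1/x$1 - (v$1)^2/(x$1)^2) + (1-\<alpha>/2)*L*(v$3)* omegaf x v + (1-\<alpha>)*L*(omegaf x v)^2"
    unfolding N c0 c1 c2 P1_eq[OF x0] P1perp_eq[OF x0 L] using x0 L
    by (simp add: x_def v_def omegaf_def P1_eq P1perp_eq field_simps power2_eq_square)
  show "N$3 = w$3 - (1-\<alpha>/2)*L*(v$1/x$1)* omegaf x v"
    unfolding N c0 c1 c2 P1_eq[OF x0] P1perp_eq[OF x0 L] using x0 L
    by (simp add: x_def v_def omegaf_def P1_eq P1perp_eq field_simps power2_eq_square)
  show "omegaf x N = (w$2/x$1 - v$2 * v$1/(x$1)^2 - w$3) - (1-\<alpha>)*(v$1/x$1)* omegaf x v"
    unfolding N c0 c1 c2 P1_eq[OF x0] P1perp_eq[OF x0 L] using x0 L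
    by (simp add: x_def v_def omegaf_def P1_eq P1perp_eq field_simps power2_eq_square)
qed

lemma ginner_frame2: "0 \<le> L \<Longrightarrow> ginner L x y z = (y$1/x$1) * (z$1/x$1) + y$3 * z$3 + (sqrt L * omegaf x y) * (sqrt L * omegaf x z)"
  by (simp add: ginner_def omega1_def omega2_def algebra_simps sqrt_sqrt_mult)

lemma ginner_nonneg: "0 \<le> L \<Longrightarrow> 0 \<le> ginner L x y y"
  unfolding ginner_def by (simp add: mult.assoc add_nonneg_nonneg)

definition Polf :: "real \<Rightarrow> real^3 \<Rightarrow> real^3 \<Rightarrow> real^3 \<Rightarrow> real^3 \<Rightarrow> real \<Rightarrow> real" where
"Polf \<alpha> x v w n L = (let b1 = v$1/x$1; b2 = v$3; wv = omegaf x v; p = x$1*n$1; q = x$1*n$2+n$3; c = x$1*n$2;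
   A1 = (w$1/x$1 - (v$1)^2/(x$1)^2) + (1-\<alpha>/2)*L*b2*wv + (1-\<alpha>)*L*wv^2;
   A2 = w$3 - (1-\<alpha>/2)*L*b1*wv; E = (w$2/x$1 - v$2 * v$1/(x$1)^2 - w$3) - (1-\<alpha>)*b1*wv
  in A1*(b2*c - L*wv*q) - A2*(b1*c - L*wv*p) + L*E*(b1*q - b2*p))"

lemma sqrt_pow46: "0 \<le> z \<Longrightarrow> sqrt z ^ 4 = z^2" "0 \<le> z \<Longrightarrow> sqrt z ^ 6 = z^3"
proof -
  have "sqrt z ^ 4 = (sqrt z ^ 2)^2" "sqrt z ^ 6 = (sqrt z ^ 2)^3" by (simp_all flip: power_mult)
  then show "0 \<le> z \<Longrightarrow> sqrt z ^ 4 = z^2" "0 \<le> z \<Longrightarrow> sqrt z ^ 6 = z^3" by simp_all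
qed

lemma kgeo_point:
  fixes \<alpha> L :: real and \<gamma> \<gamma>' :: "real \<Rightarrow> real^3" and u :: "real^3 \<Rightarrow> real"
  assumes x1: "\<gamma> t $ 1 > 0" and L: "L > 0"
    and hv: "(\<gamma>' has_vector_derivative w) (at t)"
    and h1: "((\<lambda>s. P1 L (\<gamma> s) (\<gamma>' s)) has_vector_derivative vector[w$1, \<gamma>' t$1 * \<gamma>' t$3 + \<gamma> t$1 * w$3, w$3]) (at t)"
    and h2: "((\<lambda>s. P1perp L (\<gamma> s) (\<gamma>' s)) has_vector_derivative vector[0, w$2 - \<gamma>' t$1 * \<gamma>' t$3 - \<gamma> t$1 * w$3, 0]) (at t)"
    and n: "egrad u (\<gamma> t) = n"
    and tang: "n$1 * \<gamma>' t$1 + n$2 * \<gamma>' t$2 + n$3 * \<gamma>' t$3 = 0"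
    and lpos: "(\<gamma> t$1 * n$1)^2 + (\<gamma> t$1 * n$2 + n$3)^2 > 0"
    and bpos: "(\<gamma>' t$1/\<gamma> t$1)^2 + (\<gamma>' t$3)^2 + L * (omegaf (\<gamma> t) (\<gamma>' t))^2 > 0"
  shows "kgeo L \<alpha> u \<gamma> \<gamma>' t = sqrt ((Polf \<alpha> (\<gamma> t) (\<gamma>' t) w n L)^2 /
      ((((\<gamma> t$1 * n$1)^2 + (\<gamma> t$1 * n$2 + n$3)^2) * L + (\<gamma> t$1 * n$2)^2)
       * ((\<gamma>' t$1/\<gamma> t$1)^2 + (\<gamma>' t$3)^2 + L * (omegaf (\<gamma> t) (\<gamma>' t))^2)^3))"
proof -
  define x where "x = \<gamma> t"
  define v where "v = \<gamma>' t"
  define N where "N = nabla1a L \<alpha> \<gamma> \<gamma>' t"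
  note NF = N_frame[OF x1 L hv h1 h2, of \<alpha>, folded x_def v_def N_def]
  have x0: "x$1 > 0" using x1 x_def by simp
  define sL where "sL = sqrt L"
  have sL: "sL > 0" "sL * sL = L" using L by (auto simp: sL_def)
  have sL2: "sL^2 = L" using L by (simp add: sL_def)
  define p where "p = x$1*n$1"
  define q where "q = x$1*n$2+n$3"
  define c where "c = x$1*n$2"
  define gg where "gg = ggrad L u x"
  have gg: "gg$1/x$1 = p" "gg$3 = q" "omegaf x gg = c/L"
    using x0 L by (simp_all add: gg_def ggrad_def n[folded x_def] ginv minv_def matrix_vector_mult_def sum_3
       p_def q_def c_def omegaf_def field_simps power2_eq_square)
  have nN: "egrad u x \<bullet> N = p * (N$1/x$1) + q * N$3 + c * omegaf x N"
    using x0 by (simp add: n[folded x_def] inner_vec_def sum_3 p_def q_def c_def omegaf_def field_simps)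
  have ngg: "egrad u x \<bullet> gg = p^2 + q^2 + c^2/L"
    using x0 L by (simp add: gg_def ggrad_def n[folded x_def] ginv minv_def matrix_vector_mult_def sum_3 inner_vec_def
       p_def q_def c_def field_simps power2_eq_square)
  define a1 where "a1 = N$1/x$1"
  define a2 where "a2 = N$3"
  define a3 where "a3 = sL * omegaf x N"
  define b1 where "b1 = v$1/x$1"
  define b2 where "b2 = v$3"
  define b3 where "b3 = sL * omegaf x v"
  define m3 where "m3 = c / sL"
  define lam where "lam = (a1*p+a2*q+a3*m3)/(p^2+q^2+m3^2)"
  have m3sq: "m3^2 = c^2/L" using sL by (simp add: m3_def power_divide power2_eq_square)
  have lam: "(egrad u x \<bullet> N) / (egrad u x \<bullet> gg) = lam"
    unfolding nN ngg lam_def m3sq using sL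
    by (simp add: a1_def a2_def a3_def m3_def)
  define D where "D = projT L u x N"
  have D: "D = N - lam *\<^sub>R gg"
    unfolding D_def projT_def lam[symmetric] gg_def ..
  have Dfr1: "D$1/x$1 = a1 - lam * p"
  proof -
    have "D$1/x$1 = N$1/x$1 - lam*(gg$1/x$1)" unfolding D by (simp add: diff_divide_distrib)
    then show ?thesis using gg(1) by (simp add: a1_def)
  qed
  have Dfr2: "D$3 = a2 - lam * q" unfolding D using gg(2) by (simp add: a2_def)
  have Dfr3: "sL * omegaf x D = a3 - lam * m3"
  proof -
    have "omegaf x D = omegaf x N - lam * omegaf x gg"
      unfolding D by (simp add: omegaf_def algebra_simps diff_divide_distrib)
    then have e: "omegaf x D = omegaf x N - lam * (c/L)" using gg(3) by simp
    have "sL * omegaf x D = a3 - lam * (sL * (c/L))" unfolding e a3_def by (simp add: algebra_simps)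
    moreover have "sL * (c/L) = m3" using sL L by (simp add: m3_def field_simps)
    ultimately show ?thesis by (metis times_divide_eq_right)
  qed
  note Dfr = Dfr1 Dfr2 Dfr3
  have GDD: "ginner L x D D = (a1 - lam*p)^2 + (a2 - lam*q)^2 + (a3 - lam*m3)^2"
    using L ginner_frame2[of L x D D] Dfr by (simp add: sL_def power2_eq_square)
  have GDv: "ginner L x D v = (a1 - lam*p)*b1 + (a2 - lam*q)*b2 + (a3 - lam*m3)*b3"
    using L ginner_frame2[of L x D v] Dfr by (simp add: sL_def b1_def b2_def b3_def)
  have Gvv: "ginner L x v v = b1^2 + b2^2 + b3^2"
    using L ginner_frame2[of L x v v] by (simp add: sL_def b1_def b2_def b3_def power2_eq_square)
  have bm: "b1*p + b2*q + b3*m3 = 0"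
  proof -
    have "b1*p + b2*q + b3*m3 = n$1 * v$1 + n$2 * v$2 + n$3 * v$3"
      using x0 sL by (simp add: b1_def b2_def b3_def p_def q_def m3_def c_def omegaf_def field_simps)
    then show ?thesis using tang by (simp add: x_def v_def)
  qed
  have mm: "p^2+q^2+m3^2 > 0" using lpos by (simp add: p_def q_def x_def) (smt (verit) zero_le_power2)
  have bb: "b1^2+b2^2+b3^2 > 0" using bpos sL2
    by (simp add: b1_def b2_def b3_def x_def v_def power_mult_distrib)
  have k1: "kgeo L \<alpha> u \<gamma> \<gamma>' t = sqrt (((a1 - lam*p)^2 + (a2 - lam*q)^2 + (a3 - lam*m3)^2)/(b1^2 + b2^2 + b3^2)^2
      - ((a1 - lam*p)*b1 + (a2 - lam*q)*b2 + (a3 - lam*m3)*b3)^2/(b1^2 + b2^2 + b3^2)^3)"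
  proof -
    have "kgeo L \<alpha> u \<gamma> \<gamma>' t = sqrt ((gnorm L x D)^2 / (gnorm L x v)^4 - (ginner L x D v)^2 / (gnorm L x v)^6)"
      by (simp add: kgeo_def Let_def x_def v_def D_def N_def)
    also have "(gnorm L x D)^2 = ginner L x D D" using L by (simp add: gnorm_def ginner_nonneg)
    also have "(gnorm L x v)^4 = (ginner L x v v)^2"
      using L ginner_nonneg[of L x v] by (simp add: gnorm_def sqrt_pow46)
    also have "(gnorm L x v)^6 = (ginner L x v v)^3"
      using L ginner_nonneg[of L x v] by (simp add: gnorm_def sqrt_pow46)
    finally show ?thesis unfolding GDD GDv Gvv .
  qed
  have k2: "kgeo L \<alpha> u \<gamma> \<gamma>' t = sqrt ((a1*(b2*m3-b3*q) - a2*(b1*m3-b3*p) + a3*(b1*q-b2*p))^2/((p^2+q^2+m3^2)*(b1^2+b2^2+b3^2)^3))"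
    unfolding k1 lam_def using gram[OF bm mm bb, of a1 a2 a3] by simp
  have sm3: "sL * m3 = c" using sL by (simp add: m3_def)
  have sb3: "sL * b3 = L * omegaf x v" using sL by (simp add: b3_def mult.assoc[symmetric])
  have sa3: "sL * a3 = L * omegaf x N" using sL by (simp add: a3_def mult.assoc[symmetric])
  have det0: "sL * (a1*(b2*m3-b3*q) - a2*(b1*m3-b3*p) + a3*(b1*q-b2*p))
      = a1*(b2*(sL*m3) - (sL*b3)*q) - a2*(b1*(sL*m3) - (sL*b3)*p) + (sL*a3)*(b1*q-b2*p)"
    by (simp add: algebra_simps)
  have det: "sL * (a1*(b2*m3-b3*q) - a2*(b1*m3-b3*p) + a3*(b1*q-b2*p)) = Polf \<alpha> x v w n L"
    unfolding det0 sm3 sb3 sa3 unfolding Polf_def Let_def a1_def a2_def NF b1_def b2_def p_def q_def c_def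
    using x0 by (simp add: field_simps)
  have M0: "p^2+q^2 > 0" using lpos by (simp add: p_def q_def x_def)
  have gen: "\<And>X B::real. B > 0 \<Longrightarrow> X^2/((p^2+q^2+c^2/L)*B^3) = (sL*X)^2/(((p^2+q^2)*L + c^2)*B^3)"
  proof -
    fix X B :: real assume B: "B > 0"
    have "p^2+q^2+c^2/L > 0" using M0 L by (simp add: add_pos_nonneg)
    moreover have "(p^2+q^2)*L + c^2 > 0" using M0 L by (simp add: add_pos_nonneg)
    ultimately show "X^2/((p^2+q^2+c^2/L)*B^3) = (sL*X)^2/(((p^2+q^2)*L + c^2)*B^3)"
      using B L sL2 by (simp add: power_mult_distrib field_simps)
  qed
  have "(a1*(b2*m3-b3*q) - a2*(b1*m3-b3*p) + a3*(b1*q-b2*p))^2/((p^2+q^2+m3^2)*(b1^2+b2^2+b3^2)^3)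
     = (Polf \<alpha> x v w n L)^2 / (((p^2+q^2)*L + c^2) * (b1^2+b2^2+b3^2)^3)"
    unfolding det[symmetric] m3sq by (rule gen[OF bb])
  moreover have "b1^2+b2^2+b3^2 = (v$1/x$1)^2 + (v$3)^2 + L * (omegaf x v)^2"
    using sL2 by (simp add: b1_def b2_def b3_def power_mult_distrib)
  ultimately show ?thesis unfolding k2 by (simp add: x_def v_def p_def q_def c_def)
qed

lemma divdiv_cancel: "(k::real) \<noteq> 0 \<Longrightarrow> (a/k)/(b/k) = a/b"
  by (cases "b = 0") (auto simp: field_simps)

lemma limA:
  fixes P2 P1 P0 M C B W :: real
  assumes M: "M > 0" and W: "W > 0"
  shows "((\<lambda>L. sqrt ((P2*L^2+P1*L+P0)^2/((M*L + C)*(B + L*W)^3))) \<longlongrightarrow> sqrt (P2^2/(M*W^3))) at_top"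
proof -
  have ev: "\<forall>\<^sub>F L in at_top. sqrt ((P2 + P1/L + P0/L^2)^2/((M + C/L)*(B/L + W)^3))
      = sqrt ((P2*L^2+P1*L+P0)^2/((M*L + C)*(B + L*W)^3))"
    using eventually_gt_at_top[of 0]
  proof (rule eventually_mono)
    fix L :: real assume L: "L > 0"
    have e1: "P2 + P1/L + P0/L^2 = (P2*L^2+P1*L+P0)/L^2" using L by (simp add: field_simps power2_eq_square)
    have e2: "M + C/L = (M*L + C)/L" "B/L + W = (B + L*W)/L" using L by (simp_all add: field_simps)
    have e3: "(P2 + P1/L + P0/L^2)^2 = (P2*L^2+P1*L+P0)^2/L^4"
      unfolding e1 by (simp add: power_divide flip: power_mult)
    have e4: "(M + C/L)*(B/L + W)^3 = ((M*L + C)*(B + L*W)^3)/L^4"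
      unfolding e2 by (simp add: power_divide power4_eq_xxxx power3_eq_cube)
    have "(P2 + P1/L + P0/L^2)^2/((M + C/L)*(B/L + W)^3) = ((P2*L^2+P1*L+P0)^2/L^4)/(((M*L + C)*(B + L*W)^3)/L^4)"
      unfolding e3 e4 ..
    also have "\<dots> = (P2*L^2+P1*L+P0)^2/((M*L + C)*(B + L*W)^3)"
      by (rule divdiv_cancel) (use L in simp)
    finally show "sqrt ((P2 + P1/L + P0/L^2)^2/((M + C/L)*(B/L + W)^3))
      = sqrt ((P2*L^2+P1*L+P0)^2/((M*L + C)*(B + L*W)^3))" by simp
  qed
  have z: "\<And>K. ((\<lambda>L::real. K / L) \<longlongrightarrow> 0) at_top" by real_asymp
  have z2: "\<And>K. ((\<lambda>L::real. K / L^2) \<longlongrightarrow> 0) at_top" by real_asymp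
  have "((\<lambda>L. sqrt ((P2 + P1/L + P0/L^2)^2/((M + C/L)*(B/L + W)^3))) \<longlongrightarrow>
      sqrt ((P2 + 0 + 0)^2/((M + 0)*(0 + W)^3))) at_top"
    using M W by (intro tendsto_intros z z2) auto
  then show ?thesis using Lim_transform_eventually[OF _ ev] by simp
qed

lemma limB:
  fixes P1 P0 M C B :: real
  assumes M: "M > 0" and B: "B > 0"
  shows "((\<lambda>L. sqrt ((P1*L+P0)^2/((M*L + C)*B^3)) / sqrt L) \<longlongrightarrow> sqrt (P1^2/(M*B^3))) at_top"
proof -
  have ev: "\<forall>\<^sub>F L in at_top. sqrt ((P1 + P0/L)^2/((M + C/L)*B^3))
      = sqrt ((P1*L+P0)^2/((M*L + C)*B^3)) / sqrt L"
    using eventually_gt_at_top[of 0]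
  proof (rule eventually_mono)
    fix L :: real assume L: "L > 0"
    have e1: "P1 + P0/L = (P1*L+P0)/L" "M + C/L = (M*L + C)/L" using L by (simp_all add: field_simps)
    have eq: "(P1 + P0/L)^2/((M + C/L)*B^3) = (((P1*L+P0)^2/((M*L + C)*B^3)) / L)"
    proof -
      have "(P1 + P0/L)^2/((M + C/L)*B^3) = (((P1*L+P0)^2/L)/L)/(((M*L + C)*B^3)/L)"
        unfolding e1 by (simp add: power2_eq_square)
      also have "\<dots> = ((P1*L+P0)^2/L)/((M*L + C)*B^3)" by (rule divdiv_cancel) (use L in simp)
      finally show ?thesis by simp
    qed
    then show "sqrt ((P1 + P0/L)^2/((M + C/L)*B^3)) = sqrt ((P1*L+P0)^2/((M*L + C)*B^3)) / sqrt L"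
      by (subst eq) (rule real_sqrt_divide)
  qed
  have z: "\<And>K. ((\<lambda>L::real. K / L) \<longlongrightarrow> 0) at_top" by real_asymp
  have "((\<lambda>L. sqrt ((P1 + P0/L)^2/((M + C/L)*B^3))) \<longlongrightarrow> sqrt ((P1 + 0)^2/((M + 0)*B^3))) at_top"
    using M B by (intro tendsto_intros z) auto
  then show ?thesis using Lim_transform_eventually[OF _ ev] by simp
qed

lemma limC:
  fixes P0 M C B :: real
  assumes M: "M > 0" and B: "B > 0"
  shows "((\<lambda>L. sqrt ((0*L^2 + 0*L+P0)^2/((M*L + C)*(B + L*0)^3))) \<longlongrightarrow> 0) at_top"
proof -
  have ev: "\<forall>\<^sub>F L in at_top. sqrt ((P0^2/L)/((M + C/L)*B^3))
      = sqrt ((0*L^2 + 0*L+P0)^2/((M*L + C)*(B + L*0)^3))"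
    using eventually_gt_at_top[of 0]
  proof (rule eventually_mono)
    fix L :: real assume L: "L > 0"
    have "(P0^2/L)/((M + C/L)*B^3) = (0*L^2 + 0*L+P0)^2/((M*L + C)*(B + L*0)^3)"
      using L by (simp add: field_simps power2_eq_square)
    then show "sqrt ((P0^2/L)/((M + C/L)*B^3)) = sqrt ((0*L^2 + 0*L+P0)^2/((M*L + C)*(B + L*0)^3))"
      by simp
  qed
  have z: "\<And>K. ((\<lambda>L::real. K / L) \<longlongrightarrow> 0) at_top" by real_asymp
  have "((\<lambda>L. sqrt ((P0^2/L)/((M + C/L)*B^3))) \<longlongrightarrow> sqrt (0/((M + 0)*B^3))) at_top"
    using M B by (intro tendsto_intros z) auto
  then show ?thesis using Lim_transform_eventually[OF _ ev] by simp
qed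

definition Pc2 :: "real \<Rightarrow> real^3 \<Rightarrow> real^3 \<Rightarrow> real^3 \<Rightarrow> real^3 \<Rightarrow> real" where
"Pc2 \<alpha> x v w n = (let b1 = v$1/x$1; b2 = v$3; wv = omegaf x v; p = x$1*n$1; q = x$1*n$2+n$3;
   a1 = (1-\<alpha>/2)*b2*wv + (1-\<alpha>)*wv^2; d1 = -(1-\<alpha>/2)*b1*wv in -a1*wv*q + d1*wv*p)"

definition Pc1 :: "real \<Rightarrow> real^3 \<Rightarrow> real^3 \<Rightarrow> real^3 \<Rightarrow> real^3 \<Rightarrow> real" where
"Pc1 \<alpha> x v w n = (let b1 = v$1/x$1; b2 = v$3; wv = omegaf x v; p = x$1*n$1; q = x$1*n$2+n$3; c = x$1*n$2;
   a0 = w$1/x$1 - (v$1)^2/(x$1)^2; d0 = w$3;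
   a1 = (1-\<alpha>/2)*b2*wv + (1-\<alpha>)*wv^2; d1 = -(1-\<alpha>/2)*b1*wv;
   E = (w$2/x$1 - v$2 * v$1/(x$1)^2 - w$3) - (1-\<alpha>)*b1*wv
   in a1*b2*c - a0*wv*q - d1*b1*c + d0*wv*p + E*(b1*q - b2*p))"

definition Pc0 :: "real \<Rightarrow> real^3 \<Rightarrow> real^3 \<Rightarrow> real^3 \<Rightarrow> real^3 \<Rightarrow> real" where
"Pc0 \<alpha> x v w n = (let b1 = v$1/x$1; b2 = v$3; c = x$1*n$2;
   a0 = w$1/x$1 - (v$1)^2/(x$1)^2; d0 = w$3 in a0*b2*c - d0*b1*c)"

lemma Polf_exp: "Polf \<alpha> x v w n L = Pc2 \<alpha> x v w n * L^2 + Pc1 \<alpha> x v w n * L + Pc0 \<alpha> x v w n"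
  by (simp add: Polf_def Pc2_def Pc1_def Pc0_def Let_def algebra_simps power2_eq_square)

lemma Pc_om0: "omegaf x v = 0 \<Longrightarrow> Pc2 \<alpha> x v w n = 0"
   "omegaf x v = 0 \<Longrightarrow> Pc1 \<alpha> x v w n = (w$2/x$1 - v$2 * v$1/(x$1)^2 - w$3) * ((v$1/x$1)*(x$1*n$2+n$3) - v$3*(x$1*n$1))"
  by (simp_all add: Pc2_def Pc1_def Let_def)


theorem lemma2p11:
  fixes u :: "real^3 \<Rightarrow> real" and Du :: "real^3 \<Rightarrow> real^3 \<Rightarrow> real"
    and D2u :: "3 \<Rightarrow> real^3 \<Rightarrow> real^3 \<Rightarrow> real"
    and U Sigma :: "(real^3) set"
    and \<gamma> \<gamma>' \<gamma>'' :: "real \<Rightarrow> real^3" and S :: "real set" and a b \<alpha> :: real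
  assumes U_open: "open U" and U_M: "U \<subseteq> {x. x$1 > 0}"
    and u_D: "\<forall>x\<in>U. (u has_derivative Du x) (at x)"
    and u_D2: "\<forall>i. \<forall>x\<in>U. ((\<lambda>y. Du y (axis i 1)) has_derivative D2u i x) (at x)"
    and u_D2_cont: "\<forall>i j. continuous_on U (\<lambda>x. D2u i x (axis j 1))"
    and Sigma_def: "Sigma = {x\<in>U. u x = 0}"
    and Sigma_compact: "compact Sigma"
    and grad_nz: "\<forall>x\<in>Sigma. Du x \<noteq> (\<lambda>v. 0)"
    and ab: "a < b" and S_open: "open S" and S_ab: "{a..b} \<subseteq> S"
    and \<gamma>_D: "\<forall>s\<in>S. (\<gamma> has_vector_derivative \<gamma>' s) (at s)"
    and \<gamma>_D2: "\<forall>s\<in>S. (\<gamma>' has_vector_derivative \<gamma>'' s) (at s)"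
    and \<gamma>_C2: "continuous_on S \<gamma>''"
    and \<gamma>_Sigma: "\<forall>t\<in>{a..b}. \<gamma> t \<in> Sigma"
    and \<gamma>_regular: "\<forall>t\<in>{a..b}. \<gamma>' t \<noteq> 0"
    and noncharacteristic: "\<forall>t\<in>{a..b}. (Xu X1f u (\<gamma> t), Xu X2f u (\<gamma> t)) \<noteq> (0, 0)"
  shows "\<forall>t\<in>{a..b}.
     (omegaf (\<gamma> t) (\<gamma>' t) \<noteq> 0 \<longrightarrow>
        ((\<lambda>L. kgeo L \<alpha> u \<gamma> \<gamma>' t) \<longlongrightarrow>
           \<bar>pbar u (\<gamma> t) * ((2 - \<alpha>) * (\<gamma>' t)$1 / (2 * (\<gamma> t)$1))
            + qbar u (\<gamma> t) * ((1 - \<alpha>) * (\<gamma>' t)$2 / (\<gamma> t)$1 + \<alpha> * (\<gamma>' t)$3 / 2)\<bar>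
           / \<bar>omegaf (\<gamma> t) (\<gamma>' t)\<bar>) at_top)
   \<and> (omegaf (\<gamma> t) (\<gamma>' t) = 0 \<and> deriv (\<lambda>s. omegaf (\<gamma> s) (\<gamma>' s)) t = 0 \<longrightarrow>
        ((\<lambda>L. kgeo L \<alpha> u \<gamma> \<gamma>' t) \<longlongrightarrow> 0) at_top)
   \<and> (omegaf (\<gamma> t) (\<gamma>' t) = 0 \<and> deriv (\<lambda>s. omegaf (\<gamma> s) (\<gamma>' s)) t \<noteq> 0 \<longrightarrow>
        ((\<lambda>L. kgeo L \<alpha> u \<gamma> \<gamma>' t / sqrt L) \<longlongrightarrow>
           \<bar>deriv (\<lambda>s. omegaf (\<gamma> s) (\<gamma>' s)) t\<bar>
           / (qbar u (\<gamma> t) * (\<gamma>' t)$1 / (\<gamma> t)$1 - pbar u (\<gamma> t) * (\<gamma>' t)$3)^2) at_top)"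
proof (intro ballI)
  fix t assume t: "t \<in> {a..b}"
  define x where "x = \<gamma> t"
  define v where "v = \<gamma>' t"
  define w where "w = \<gamma>'' t"
  define n where "n = egrad u x"
  have tS: "t \<in> S" using t S_ab by auto
  have xU: "x \<in> U" using \<gamma>_Sigma t Sigma_def x_def by auto
  have x1: "x$1 > 0" using xU U_M by auto
  have x0: "x$1 \<noteq> 0" using x1 by simp
  have hg: "(\<gamma> has_vector_derivative v) (at t)" using \<gamma>_D tS v_def by auto
  have hv: "(\<gamma>' has_vector_derivative w) (at t)" using \<gamma>_D2 tS w_def by auto
  have uD: "(u has_derivative Du x) (at x)" using u_D xU by auto
  have lin: "linear (Du x)" using has_derivative_linear[OF uD] .
  have fr: "frechet_derivative u (at x) = Du x" using frechet_derivative_at[OF uD] by simp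
  have nn: "n$i = Du x (axis i 1)" for i by (simp add: n_def egrad_def fr)
  have Dexp: "Du x y = n$1*y$1 + n$2*y$2 + n$3*y$3" for y
  proof -
    have "y = y$1 *\<^sub>R axis 1 1 + y$2 *\<^sub>R axis 2 1 + y$3 *\<^sub>R axis 3 1"
      by (simp add: vec_eq_iff forall_3 axis_nth3)
    then have "Du x y = Du x (y$1 *\<^sub>R axis 1 1 + y$2 *\<^sub>R axis 2 1 + y$3 *\<^sub>R axis 3 1)" by simp
    also have "\<dots> = y$1 * Du x (axis 1 1) + y$2 * Du x (axis 2 1) + y$3 * Du x (axis 3 1)"
      using lin by (simp add: linear_add linear_scale)
    finally show ?thesis by (simp add: nn mult.commute)
  qed
  have tang: "Du x v = 0"
  proof -
    have c1: "((\<lambda>s. u (\<gamma> s)) has_derivative (\<lambda>h. Du x (h *\<^sub>R v))) (at t)"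
      using diff_chain_at[OF hg[unfolded has_vector_derivative_def] uD[unfolded x_def]]
      unfolding x_def o_def by simp
    have "(\<lambda>h. Du x (h *\<^sub>R v)) = (\<lambda>h. h *\<^sub>R Du x v)"
      using lin by (simp add: linear_scale)
    then have c2: "((\<lambda>s. u (\<gamma> s)) has_vector_derivative Du x v) (at t within {a..b})"
      using c1 unfolding has_vector_derivative_def by (simp add: has_derivative_at_withinI)
    have c3: "((\<lambda>s. u (\<gamma> s)) has_vector_derivative 0) (at t within {a..b})"
    proof (rule has_vector_derivative_transform_within[of "\<lambda>s. 0" 0 t "{a..b}" 1])
      show "((\<lambda>s. 0) has_vector_derivative 0) (at t within {a..b})" by simp
      show "(0::real) < 1" by simp
      show "t \<in> {a..b}" by (rule t)
      fix s assume "s \<in> {a..b}"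
      then show "(0::real) = u (\<gamma> s)" using \<gamma>_Sigma Sigma_def by auto
    qed
    have nb: "at t within {a..b} \<noteq> bot"
      using t ab by (simp add: trivial_limit_within)
    show ?thesis using vector_derivative_unique_within[OF nb c2 c3] .
  qed
  have tang': "n$1 * v$1 + n$2 * v$2 + n$3 * v$3 = 0" using tang Dexp[of v] by simp
  define p where "p = x$1*n$1"
  define q where "q = x$1*n$2+n$3"
  have Xp: "Xu X1f u x = p" by (simp add: Xu_def fr Dexp X1f_def p_def)
  have Xq: "Xu X2f u x = q" by (simp add: Xu_def fr Dexp X2f_def q_def)
  have lpos: "p^2 + q^2 > 0"
    using noncharacteristic t Xp Xq x_def by (auto simp: add_pos_nonneg sum_power2_gt_zero_iff)
  have vnz: "v \<noteq> 0" using \<gamma>_regular t v_def by auto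
  have bpos: "(v$1/x$1)^2 + (v$3)^2 + L * (omegaf x v)^2 > 0" if L: "L > 0" for L
  proof (rule ccontr)
    assume "\<not> ?thesis"
    then have "(v$1/x$1)^2 + (v$3)^2 + L * (omegaf x v)^2 = 0"
      using L by (smt (verit) zero_le_power2 mult_nonneg_nonneg)
    then have "v$1/x$1 = 0" "v$3 = 0" "omegaf x v = 0" using L
      by (smt (verit) zero_le_power2 mult_nonneg_nonneg power_eq_0_iff mult_eq_0_iff)+
    then have "v = 0" using x0 by (simp add: vec_eq_iff forall_3 omegaf_def)
    then show False using vnz by simp
  qed
  have contg: "continuous_on S \<gamma>"
    using \<gamma>_D by (meson continuous_at_imp_continuous_on has_vector_derivative_continuous)
  define T where "T = S \<inter> \<gamma> -` U"
  have T: "open T" "t \<in> T" using continuous_open_preimage[OF contg S_open U_open] xU tS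
    by (auto simp: T_def x_def)
  have T1: "\<gamma> s $ 1 \<noteq> 0" if "s \<in> T" for s using that U_M by (force simp: T_def)
  have dvec1: "((\<lambda>s. vector [\<gamma>' s$1, \<gamma> s$1 * \<gamma>' s$3, \<gamma>' s$3] :: real^3) has_vector_derivative
      vector [w$1, v$1 * v$3 + x$1 * w$3, w$3]) (at t)"
  proof (rule vd_vector3)
    show "((\<lambda>s. \<gamma>' s $ 1) has_real_derivative w $ 1) (at t)" by (rule vd_nth[OF hv])
    show "((\<lambda>s. \<gamma>' s $ 3) has_real_derivative w $ 3) (at t)" by (rule vd_nth[OF hv])
    have "((\<lambda>s. \<gamma> s $ 1 * \<gamma>' s $ 3) has_real_derivative v$1 * \<gamma>' t $ 3 + w$3 * \<gamma> t $ 1) (at t)"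
      by (rule DERIV_mult[OF vd_nth[OF hg] vd_nth[OF hv]])
    then show "((\<lambda>s. \<gamma> s $ 1 * \<gamma>' s $ 3) has_real_derivative v $ 1 * v $ 3 + x $ 1 * w $ 3) (at t)"
      by (simp add: x_def v_def mult.commute)
  qed
  have dvec2: "((\<lambda>s. vector [0, \<gamma>' s$2 - \<gamma> s$1 * \<gamma>' s$3, 0] :: real^3) has_vector_derivative
      vector [0, w$2 - v$1 * v$3 - x$1 * w$3, 0]) (at t)"
  proof (rule vd_vector3)
    show "((\<lambda>s. 0) has_real_derivative 0) (at t)" by simp
    show "((\<lambda>s. 0) has_real_derivative 0) (at t)" by simp
    have "((\<lambda>s. \<gamma> s $ 1 * \<gamma>' s $ 3) has_real_derivative v$1 * \<gamma>' t $ 3 + w$3 * \<gamma> t $ 1) (at t)"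
      by (rule DERIV_mult[OF vd_nth[OF hg] vd_nth[OF hv]])
    from DERIV_diff[OF vd_nth[OF hv, of 2] this]
    show "((\<lambda>s. \<gamma>' s $ 2 - \<gamma> s $ 1 * \<gamma>' s $ 3) has_real_derivative w $ 2 - v $ 1 * v $ 3 - x $ 1 * w $ 3) (at t)"
      by (simp add: x_def v_def algebra_simps)
  qed
  have kform: "kgeo L \<alpha> u \<gamma> \<gamma>' t = sqrt ((Pc2 \<alpha> x v w n * L^2 + Pc1 \<alpha> x v w n * L + Pc0 \<alpha> x v w n)^2 /
      ((((x$1 * n$1)^2 + (x$1 * n$2 + n$3)^2) * L + (x$1 * n$2)^2)
       * (((v$1/x$1)^2 + (v$3)^2) + L * (omegaf x v)^2)^3))" if L: "L > 0" for L
  proof -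
    have h1: "((\<lambda>s. P1 L (\<gamma> s) (\<gamma>' s)) has_vector_derivative vector[w$1, \<gamma>' t$1 * \<gamma>' t$3 + \<gamma> t$1 * w$3, w$3]) (at t)"
      using has_vector_derivative_transform_within_open[OF dvec1 T] T1
      by (simp add: P1_eq x_def v_def)
    have h2: "((\<lambda>s. P1perp L (\<gamma> s) (\<gamma>' s)) has_vector_derivative vector[0, w$2 - \<gamma>' t$1 * \<gamma>' t$3 - \<gamma> t$1 * w$3, 0]) (at t)"
      using has_vector_derivative_transform_within_open[OF dvec2 T] T1 L
      by (simp add: P1perp_eq x_def v_def)
    have "kgeo L \<alpha> u \<gamma> \<gamma>' t = sqrt ((Polf \<alpha> (\<gamma> t) (\<gamma>' t) w n L)^2 /
      ((((\<gamma> t$1 * n$1)^2 + (\<gamma> t$1 * n$2 + n$3)^2) * L + (\<gamma> t$1 * n$2)^2)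
       * ((\<gamma>' t$1/\<gamma> t$1)^2 + (\<gamma>' t$3)^2 + L * (omegaf (\<gamma> t) (\<gamma>' t))^2)^3))"
      by (rule kgeo_point[OF _ L hv h1 h2])
        (use x1 tang' lpos bpos[OF L] in \<open>simp_all add: x_def v_def n_def p_def q_def\<close>)
    then show ?thesis by (simp add: Polf_exp x_def v_def)
  qed
  have dom: "deriv (\<lambda>s. omegaf (\<gamma> s) (\<gamma>' s)) t = w$2/x$1 - v$2 * v$1/(x$1)^2 - w$3"
  proof -
    have "((\<lambda>s. \<gamma>' s$2 / \<gamma> s$1 - \<gamma>' s$3) has_real_derivative w$2/x$1 - v$2 * v$1/(x$1)^2 - w$3) (at t)"
      using vd_nth[OF hg, of 1] vd_nth[OF hv, of 2] vd_nth[OF hv, of 3] x0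
      by (auto intro!: derivative_eq_intros simp: x_def v_def field_simps power2_eq_square)
    then show ?thesis unfolding omegaf_def by (rule DERIV_imp_deriv)
  qed
  define M where "M = p^2 + q^2"
  define Cc where "Cc = (x$1 * n$2)^2"
  define B where "B = (v$1/x$1)^2 + (v$3)^2"
  define W where "W = (omegaf x v)^2"
  define Q2 where "Q2 = Pc2 \<alpha> x v w n"
  define Q1 where "Q1 = Pc1 \<alpha> x v w n"
  define Q0 where "Q0 = Pc0 \<alpha> x v w n"
  have Mpos: "M > 0" using lpos M_def by simp
  have kf: "\<forall>\<^sub>F L in at_top. sqrt ((Q2*L^2+Q1*L+Q0)^2/((M*L + Cc)*(B + L*W)^3)) = kgeo L \<alpha> u \<gamma> \<gamma>' t"
    using eventually_gt_at_top[of 0]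
    by (rule eventually_mono) (simp add: kform M_def Cc_def B_def W_def Q2_def Q1_def Q0_def p_def q_def)
  have pb: "pbar u x = p / sqrt M" and qb: "qbar u x = q / sqrt M"
    by (simp_all add: pbar_def qbar_def Xp Xq M_def)
  define om' where "om' = w$2/x$1 - v$2 * v$1/(x$1)^2 - w$3"
  have part1: "omegaf x v \<noteq> 0 \<longrightarrow>
        ((\<lambda>L. kgeo L \<alpha> u \<gamma> \<gamma>' t) \<longlongrightarrow>
           \<bar>pbar u x * ((2 - \<alpha>) * v$1 / (2 * x$1))
            + qbar u x * ((1 - \<alpha>) * v$2 / x$1 + \<alpha> * v$3 / 2)\<bar>
           / \<bar>omegaf x v\<bar>) at_top"
  proof
    assume om: "omegaf x v \<noteq> 0"
    have Wpos: "W > 0" using om W_def by simp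
    define Z0 where "Z0 = p * ((2 - \<alpha>) * v$1 / (2 * x$1)) + q * ((1 - \<alpha>) * v$2 / x$1 + \<alpha> * v$3 / 2)"
    have Q2e: "Q2 = -(W * Z0)"
      using x0 by (simp add: Q2_def Pc2_def Let_def Z0_def W_def p_def q_def omegaf_def field_simps power2_eq_square)
    have sM: "sqrt M > 0" using Mpos by simp
    have "Q2^2/(M*W^3) = (Z0 / (sqrt M * omegaf x v))^2"
      unfolding Q2e W_def using Mpos om
      by (simp add: power_mult_distrib power_divide field_simps power2_eq_square power3_eq_cube)
    then have val: "sqrt (Q2^2/(M*W^3)) = \<bar>pbar u x * ((2 - \<alpha>) * v$1 / (2 * x$1))
            + qbar u x * ((1 - \<alpha>) * v$2 / x$1 + \<alpha> * v$3 / 2)\<bar> / \<bar>omegaf x v\<bar>"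
    proof -
      have e: "pbar u x * ((2 - \<alpha>) * v$1 / (2 * x$1)) + qbar u x * ((1 - \<alpha>) * v$2 / x$1 + \<alpha> * v$3 / 2) = Z0 / sqrt M"
        using sM x0 by (simp add: pb qb Z0_def field_simps)
      show ?thesis unfolding e \<open>Q2^2/(M*W^3) = (Z0 / (sqrt M * omegaf x v))^2\<close> real_sqrt_abs
        using sM by (simp add: abs_divide abs_mult)
    qed
    show "((\<lambda>L. kgeo L \<alpha> u \<gamma> \<gamma>' t) \<longlongrightarrow>
           \<bar>pbar u x * ((2 - \<alpha>) * v$1 / (2 * x$1))
            + qbar u x * ((1 - \<alpha>) * v$2 / x$1 + \<alpha> * v$3 / 2)\<bar>
           / \<bar>omegaf x v\<bar>) at_top"
      using Lim_transform_eventually[OF limA[OF Mpos Wpos, of Q2 Q1 Q0 Cc B] kf] unfolding val .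
  qed
  have Bpos0: "omegaf x v = 0 \<Longrightarrow> B > 0" using bpos[of 1] by (simp add: B_def)
  have part2: "omegaf x v = 0 \<and> deriv (\<lambda>s. omegaf (\<gamma> s) (\<gamma>' s)) t = 0 \<longrightarrow>
        ((\<lambda>L. kgeo L \<alpha> u \<gamma> \<gamma>' t) \<longlongrightarrow> 0) at_top"
  proof
    assume h: "omegaf x v = 0 \<and> deriv (\<lambda>s. omegaf (\<gamma> s) (\<gamma>' s)) t = 0"
    have Q: "Q2 = 0" "Q1 = 0" "W = 0"
      using h Pc_om0[of x v \<alpha> w n] dom by (simp_all add: Q2_def Q1_def W_def)
    show "((\<lambda>L. kgeo L \<alpha> u \<gamma> \<gamma>' t) \<longlongrightarrow> 0) at_top"
      using Lim_transform_eventually[OF limC[OF Mpos Bpos0[OF h[THEN conjunct1]], of Q0 Cc] kf[unfolded Q]] .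
  qed
  have part3: "omegaf x v = 0 \<and> deriv (\<lambda>s. omegaf (\<gamma> s) (\<gamma>' s)) t \<noteq> 0 \<longrightarrow>
        ((\<lambda>L. kgeo L \<alpha> u \<gamma> \<gamma>' t / sqrt L) \<longlongrightarrow>
           \<bar>deriv (\<lambda>s. omegaf (\<gamma> s) (\<gamma>' s)) t\<bar>
           / (qbar u x * v$1 / x$1 - pbar u x * v$3)^2) at_top"
  proof
    assume h: "omegaf x v = 0 \<and> deriv (\<lambda>s. omegaf (\<gamma> s) (\<gamma>' s)) t \<noteq> 0"
    have om: "omegaf x v = 0" using h by simp
    have Bp: "B > 0" using Bpos0[OF om] .
    define K where "K = (v$1/x$1)*q - v$3*p"
    have Q: "Q2 = 0" "W = 0" "Q1 = om' * K"
      using om Pc_om0[of x v \<alpha> w n] by (simp_all add: Q2_def Q1_def W_def om'_def K_def p_def q_def)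
    have v2: "v$2 = x$1 * v$3" using om x0 by (simp add: omegaf_def field_simps)
    have pbq: "p * (v$1/x$1) + q * v$3 = 0"
      using tang' v2 x0 by (simp add: p_def q_def field_simps)
    have KMB: "K^2 = M * B"
    proof -
      have "K^2 + (p * (v$1/x$1) + q * v$3)^2 = M * B"
        by (simp add: K_def M_def B_def power2_eq_square algebra_simps add_divide_distrib)
      then show ?thesis using pbq by simp
    qed
    have kf3: "\<forall>\<^sub>F L in at_top. sqrt ((Q1*L+Q0)^2/((M*L + Cc)*B^3)) / sqrt L = kgeo L \<alpha> u \<gamma> \<gamma>' t / sqrt L"
      using kf by (rule eventually_mono) (simp add: Q)
    have sM: "sqrt M > 0" using Mpos by simp
    have den: "(qbar u x * v$1 / x$1 - pbar u x * v$3)^2 = B"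
    proof -
      have "(qbar u x * v$1 / x$1 - pbar u x * v$3)^2 = K^2 / M"
        using sM Mpos by (simp add: pb qb K_def power_divide field_simps power2_eq_square)
      then show ?thesis using KMB Mpos by simp
    qed
    have "Q1^2/(M*B^3) = (om'/B)^2"
      unfolding Q(3) using Mpos Bp KMB by (simp add: power_mult_distrib field_simps power2_eq_square power3_eq_cube)
    then have val: "sqrt (Q1^2/(M*B^3)) = \<bar>deriv (\<lambda>s. omegaf (\<gamma> s) (\<gamma>' s)) t\<bar> / (qbar u x * v$1 / x$1 - pbar u x * v$3)^2"
      using Bp by (simp add: den dom om'_def)
    show "((\<lambda>L. kgeo L \<alpha> u \<gamma> \<gamma>' t / sqrt L) \<longlongrightarrow>
           \<bar>deriv (\<lambda>s. omegaf (\<gamma> s) (\<gamma>' s)) t\<bar>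
           / (qbar u x * v$1 / x$1 - pbar u x * v$3)^2) at_top"
      using Lim_transform_eventually[OF limB[OF Mpos Bp, of Q1 Q0 Cc] kf3] unfolding val .
  qed
  show "(omegaf (\<gamma> t) (\<gamma>' t) \<noteq> 0 \<longrightarrow>
        ((\<lambda>L. kgeo L \<alpha> u \<gamma> \<gamma>' t) \<longlongrightarrow>
           \<bar>pbar u (\<gamma> t) * ((2 - \<alpha>) * (\<gamma>' t)$1 / (2 * (\<gamma> t)$1))
            + qbar u (\<gamma> t) * ((1 - \<alpha>) * (\<gamma>' t)$2 / (\<gamma> t)$1 + \<alpha> * (\<gamma>' t)$3 / 2)\<bar>
           / \<bar>omegaf (\<gamma> t) (\<gamma>' t)\<bar>) at_top)
   \<and> (omegaf (\<gamma> t) (\<gamma>' t) = 0 \<and> deriv (\<lambda>s. omegaf (\<gamma> s) (\<gamma>' s)) t = 0 \<longrightarrow>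
        ((\<lambda>L. kgeo L \<alpha> u \<gamma> \<gamma>' t) \<longlongrightarrow> 0) at_top)
   \<and> (omegaf (\<gamma> t) (\<gamma>' t) = 0 \<and> deriv (\<lambda>s. omegaf (\<gamma> s) (\<gamma>' s)) t \<noteq> 0 \<longrightarrow>
        ((\<lambda>L. kgeo L \<alpha> u \<gamma> \<gamma>' t / sqrt L) \<longlongrightarrow>
           \<bar>deriv (\<lambda>s. omegaf (\<gamma> s) (\<gamma>' s)) t\<bar>
           / (qbar u (\<gamma> t) * (\<gamma>' t)$1 / (\<gamma> t)$1 - pbar u (\<gamma> t) * (\<gamma>' t)$3)^2) at_top)"
    using part1 part2 part3 unfolding x_def v_def by blast
qed


end
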